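(* For any $\beta>0$, $$\sum_{(m,n,p)\in\mathbb Z^3\setminus\{0\}} T(m,n,p)\,e^{-\beta R(m,n,p)}>0,$$ where $R(m,n,p)=m^2+n^2+p^2+mp+np$ and $T(m,n,p)=mn(m+p)(n+p)$. *)

theory Defs
  imports "HOL-Analysis.Analysis"
begin

definition R :: "int \<Rightarrow> int \<Rightarrow> int \<Rightarrow> int" where
  "R m n p = m^2 + n^2 + p^2 + m*p + n*p"

definition T :: "int \<Rightarrow> int \<Rightarrow> int \<Rightarrow> int" where
  "T m n p = m * n * (m + p) * (n + p)"

end

theory Submission
  imports Defs
begin

lemma exp_split: "r = (x+y)/2 \<Longrightarrow> exp (- (b::real) * r) = exp(-b/2 * x) * exp(-b/2 * y)"
proof -
  assume "r = (x+y)/2"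
  then have "- b * r = -b/2 * x + -b/2*y" by (simp add: field_simps)
  then show ?thesis by (simp only: exp_add)
qed

lemma u_bound:
  fixes \<beta> :: real and m p :: int
  assumes b: "\<beta> > 0"
  shows "\<bar>real_of_int (m*(m+p)) * exp(-\<beta>/2 * real_of_int (m^2+(m+p)^2))\<bar>
     \<le> 8/\<beta> * exp(-(\<beta>/8)*real_of_int (m^2)) * exp(-(\<beta>/8)*real_of_int (p^2))"
proof -
  define x where "x = real_of_int m"
  define y where "y = real_of_int p"
  define a where "a = x^2 + (x+y)^2"
  have a0: "a \<ge> 0" unfolding a_def by simp
  have h1: "\<bar>x*(x+y)\<bar> \<le> a"
  proof -
    have "2*\<bar>x*(x+y)\<bar> \<le> x^2 + (x+y)^2"
      using sum_squares_bound[of x "x+y"] sum_squares_bound[of x "-(x+y)"]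
      by (auto simp: abs_if algebra_simps power2_eq_square)
    then show ?thesis unfolding a_def using a0[unfolded a_def] by linarith
  qed
  have h2: "3*a \<ge> x^2 + y^2"
  proof -
    have "y^2 \<le> 2*(x^2 + (x+y)^2)"
    proof -
      have "0 \<le> (2*x+y)^2" by simp
      then show ?thesis by (simp add: power2_eq_square algebra_simps)
    qed
    moreover have "0 \<le> (x+y)^2" by simp
    ultimately have "x^2+y^2 \<le> 3*x^2 + 3*(x+y)^2" by (smt (verit))
    then show ?thesis unfolding a_def by (simp add: algebra_simps)
  qed
  have h3: "\<beta>*a/8 \<le> exp(\<beta>*a/8)"
    using exp_ge_add_one_self[of "\<beta>*a/8"] by linarith
  have h4: "a \<le> 8/\<beta> * exp(\<beta>*a/8)"
    using h3 b by (simp add: field_simps)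
  have "\<bar>x*(x+y) * exp(-\<beta>/2 * a)\<bar> = \<bar>x*(x+y)\<bar> * exp(-\<beta>/2 * a)"
    by (simp add: abs_mult)
  also have "\<dots> \<le> a * exp(-\<beta>/2 * a)"
    using h1 by (intro mult_right_mono) auto
  also have "\<dots> \<le> 8/\<beta> * exp(\<beta>*a/8) * exp(-\<beta>/2 * a)"
    using h4 by (intro mult_right_mono) auto
  also have "\<dots> = 8/\<beta> * exp(-(3*\<beta>/8)*a)"
    by (simp add: mult.assoc exp_add[symmetric] field_simps)
  also have "\<dots> \<le> 8/\<beta> * exp(-(\<beta>/8)*(x^2+y^2))"
  proof -
    have "\<beta>*(x^2+y^2) \<le> \<beta>*(3*a)" using h2 b by (intro mult_left_mono) auto
    then have "-(3*\<beta>/8)*a \<le> -(\<beta>/8)*(x^2+y^2)" by (simp add: algebra_simps)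
    then show ?thesis using b by (intro mult_left_mono) auto
  qed
  also have "\<dots> = 8/\<beta> * exp(-(\<beta>/8)*x^2) * exp(-(\<beta>/8)*y^2)"
    by (simp add: mult.assoc exp_add[symmetric] field_simps)
  finally show ?thesis unfolding x_def y_def a_def by simp
qed

lemma gauss_summable:
  fixes \<gamma> :: real assumes g: "\<gamma> > 0"
  shows "(\<lambda>k::int. exp(-\<gamma> * real_of_int (k^2))) summable_on UNIV"
proof -
  define r where "r = exp(-\<gamma>)"
  have r0: "0 \<le> r" "r < 1" using g by (auto simp: r_def)
  define h where "h k = r ^ nat \<bar>k\<bar>" for k :: int
  have gs: "(\<lambda>n::nat. r^n) summable_on UNIV"
    by (rule summable_nonneg_imp_summable_on) (use r0 in \<open>auto intro: summable_geometric\<close>)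
  have s1: "h summable_on range int"
    by (subst summable_on_reindex) (use gs in \<open>auto simp: h_def o_def inj_on_def\<close>)
  have s2: "h summable_on range (\<lambda>n. - int n)"
    by (subst summable_on_reindex) (use gs in \<open>auto simp: h_def o_def inj_on_def\<close>)
  have U: "(UNIV::int set) = range int \<union> range (\<lambda>n. - int n)"
  proof -
    { fix k :: int have "k \<in> range int \<union> range (\<lambda>n. - int n)"
      proof (cases "k \<ge> 0")
        case True then show ?thesis by (auto intro: image_eqI[of _ _ "nat k"])
      next
        case False then show ?thesis by (auto intro!: image_eqI[of _ _ "nat (-k)"])
      qed }
    then show ?thesis by auto
  qed
  have hs: "h summable_on UNIV" unfolding U by (rule summable_on_union[OF s1 s2])
  show ?thesis
  proof (rule summable_on_comparison_test[OF hs])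
    fix k :: int
    show "0 \<le> exp(-\<gamma> * real_of_int (k^2))" by simp
    have "real (nat \<bar>k\<bar>) \<le> real_of_int (k^2)"
    proof -
      have "\<bar>k\<bar> \<le> k^2"
      proof (cases "k = 0")
        case False
        then have "1 \<le> \<bar>k\<bar>" by simp
        then have "\<bar>k\<bar> * 1 \<le> \<bar>k\<bar> * \<bar>k\<bar>" by (intro mult_left_mono) auto
        then show ?thesis by (simp add: power2_eq_square abs_mult[symmetric])
      qed simp
      then have "real_of_int \<bar>k\<bar> \<le> real_of_int (k^2)" by (simp only: of_int_le_iff)
      then show ?thesis by simp
    qed
    then have "exp(-\<gamma> * real_of_int (k^2)) \<le> exp(real (nat \<bar>k\<bar>) * (-\<gamma>))"
      using g by (simp add: mult_left_mono)
    also have "\<dots> = h k" unfolding h_def r_def by (rule exp_of_nat_mult)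
    finally show "exp(-\<gamma> * real_of_int (k^2)) \<le> h k" .
  qed
qed

lemma prod_summable:
  fixes g :: "int \<Rightarrow> real"
  assumes gs: "g summable_on UNIV" and g0: "\<And>k. g k \<ge> 0"
  shows "(\<lambda>(m,n). g m * g n) summable_on UNIV"
proof -
  have "(\<lambda>(m,n). g m * g n) summable_on Sigma UNIV (\<lambda>_. UNIV)"
  proof (rule summable_on_SigmaI[where g = "\<lambda>m. g m * infsum g UNIV"])
    fix m :: int assume "m \<in> UNIV"
    show "((\<lambda>n. (\<lambda>(m,n). g m * g n) (m, n)) has_sum g m * infsum g UNIV) UNIV"
      using has_sum_cmult_right[OF has_sum_infsum[OF gs], of "g m"] by simp
  next
    show "(\<lambda>m. g m * infsum g UNIV) summable_on UNIV"
      by (rule summable_on_cmult_left[OF gs])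
  next
    fix m n :: int show "0 \<le> (\<lambda>(m,n). g m * g n) (m, n)" using g0 by simp
  qed
  then show ?thesis by simp
qed

lemma prod3_summable:
  fixes g :: "int \<Rightarrow> real"
  assumes gs: "g summable_on UNIV" and g0: "\<And>k. g k \<ge> 0"
  shows "(\<lambda>(p,(m,n)). g p * (g m * g n)) summable_on UNIV"
proof -
  define G2 where "G2 = (\<lambda>(m::int,n::int). g m * g n)"
  have s2: "G2 summable_on UNIV" unfolding G2_def by (rule prod_summable[OF gs g0])
  have "(\<lambda>(p,mn). g p * G2 mn) summable_on Sigma UNIV (\<lambda>_. UNIV)"
  proof (rule summable_on_SigmaI[where g = "\<lambda>p. g p * infsum G2 UNIV"])
    fix p :: int assume "p \<in> UNIV"
    show "((\<lambda>mn. (\<lambda>(p,mn). g p * G2 mn) (p, mn)) has_sum g p * infsum G2 UNIV) UNIV"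
      using has_sum_cmult_right[OF has_sum_infsum[OF s2], of "g p"] by simp
  next
    show "(\<lambda>p. g p * infsum G2 UNIV) summable_on UNIV"
      by (rule summable_on_cmult_left[OF gs])
  next
    fix p mn show "0 \<le> (\<lambda>(p,mn). g p * G2 mn) (p, mn)" using g0
      by (auto simp: G2_def split: prod.splits)
  qed
  then show ?thesis by (simp add: G2_def case_prod_unfold)
qed

theorem lemma5p2:
  fixes \<beta> :: real
  assumes "\<beta> > 0"
  shows "(\<lambda>(m, n, p). real_of_int (T m n p) * exp (- \<beta> * real_of_int (R m n p)))
            summable_on (UNIV - {(0, 0, 0)})
       \<and> (\<Sum>\<^sub>\<infinity>(m, n, p)\<in>UNIV - {(0::int, 0::int, 0::int)}.
            real_of_int (T m n p) * exp (- \<beta> * real_of_int (R m n p))) > 0"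
proof -
  have b: "\<beta> > 0" by fact
  define u where "u p m = real_of_int (m*(m+p)) * exp(-\<beta>/2 * real_of_int (m^2+(m+p)^2))" for p m :: int
  define g where "g k = exp(-(\<beta>/8) * real_of_int (k^2))" for k :: int
  define C where "C = 8/\<beta>"
  define g3 where "g3 = (\<lambda>(p::int,(m::int,n::int)). u p m * u p n)"
  define f3 where "f3 = (\<lambda>(m, n, p). real_of_int (T m n p) * exp (- \<beta> * real_of_int (R m n p)))"
  have C0: "C \<ge> 0" using b by (simp add: C_def)
  have g0: "g k \<ge> 0" for k by (simp add: g_def)
  have g1: "g k \<le> 1" for k using b by (simp add: g_def)
  have gs: "g summable_on UNIV" unfolding g_def by (rule gauss_summable) (use b in simp)
  have ub: "\<bar>u p m\<bar> \<le> C * g m * g p" for p m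
    unfolding u_def C_def g_def using u_bound[OF b, of m p] by simp
  have f3g3: "f3 (m,n,p) = g3 (p,(m,n))" for m n p
  proof -
    have "real_of_int (R m n p) = (real_of_int (m^2+(m+p)^2) + real_of_int (n^2+(n+p)^2))/2"
      unfolding R_def by (simp add: algebra_simps power2_eq_square)
    then have "exp (- \<beta> * real_of_int (R m n p)) =
       exp(-\<beta>/2 * real_of_int (m^2+(m+p)^2)) * exp(-\<beta>/2 * real_of_int (n^2+(n+p)^2))"
      by (rule exp_split)
    moreover have "real_of_int (T m n p) = real_of_int (m*(m+p)) * real_of_int (n*(n+p))"
      unfolding T_def of_int_mult by (simp only: mult_ac)
    ultimately show ?thesis unfolding f3_def g3_def u_def
      by (simp only: prod.case mult_ac)
  qed
  have Gs: "(\<lambda>(p,(m,n)). g p * (g m * g n)) summable_on UNIV"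
    by (rule prod3_summable[OF gs g0])
  have g3s: "g3 summable_on UNIV"
  proof -
    have "(\<lambda>x. C*C * (\<lambda>(p,(m,n)). g p * (g m * g n)) x) summable_on UNIV"
      by (rule summable_on_cmult_right[OF Gs])
    then have a: "(\<lambda>y. norm ((\<lambda>x. C*C * (\<lambda>(p,(m,n)). g p * (g m * g n)) x) y)) summable_on UNIV"
      by (rule summable_on_iff_abs_summable_on_real[THEN iffD1])
    have "(\<lambda>y. norm (g3 y)) summable_on UNIV"
    proof (rule Infinite_Sum.abs_summable_on_comparison_test[OF a])
      fix x :: "int \<times> int \<times> int"
      obtain p m n where x: "x = (p,(m,n))" by (cases x) auto
      have "\<bar>u p m * u p n\<bar> \<le> (C * g m * g p) * (C * g n * g p)"
        unfolding abs_mult using ub[of p m] ub[of p n]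
        by (intro mult_mono) (auto simp: C0 g0)
      also have "\<dots> = C*C * (g p * (g m * g n)) * g p" by (simp add: algebra_simps)
      also have "\<dots> \<le> C*C * (g p * (g m * g n)) * 1"
        using g1[of p] C0 g0 by (intro mult_left_mono) auto
      finally show "norm (g3 x) \<le> norm (C*C * (\<lambda>(p,(m,n)). g p * (g m * g n)) x)"
        using C0 g0 by (simp add: x g3_def)
    qed
    then show ?thesis by (rule summable_on_iff_abs_summable_on_real[THEN iffD2])
  qed
  define hh where "hh = (\<lambda>(m::int,n::int,p::int). (p,(m,n)))"
  have bij: "bij_betw hh UNIV UNIV"
    by (rule bij_betwI[where g = "\<lambda>(p,m,n). (m,n,p)"]) (auto simp: hh_def)
  have f3eq: "f3 = (\<lambda>x. g3 (hh x))" by (auto simp: hh_def f3g3)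
  have f3s: "f3 summable_on UNIV"
    unfolding f3eq using summable_on_reindex_bij_betw[OF bij, of g3] g3s by simp
  have f3i: "infsum f3 UNIV = infsum g3 UNIV"
    unfolding f3eq by (rule infsum_reindex_bij_betw[OF bij])
  have f30: "f3 (0,0,0) = 0" by (simp add: f3_def T_def)
  have sumD: "f3 summable_on (UNIV - {(0,0,0)})"
    by (rule summable_on_subset[OF f3s]) auto
  have infD: "infsum f3 (UNIV - {(0,0,0)}) = infsum f3 UNIV"
    by (rule infsum_cong_neutral) (auto simp: f30)
  have g3s': "(\<lambda>(p,mn). g3 (p,mn)) summable_on Sigma UNIV (\<lambda>_. UNIV)" using g3s by simp
  have s2: "(\<lambda>(m,n). u p m * u p n) summable_on UNIV" for p
    using summable_on_SigmaD1[OF g3s', of p] by (simp add: g3_def case_prod_unfold)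
  have us: "u p summable_on UNIV" for p
  proof -
    have "(\<lambda>m. C * g p * g m) summable_on UNIV" by (rule summable_on_cmult_right[OF gs])
    then have a: "(\<lambda>y. norm ((\<lambda>m. C * g p * g m) y)) summable_on UNIV"
      by (rule summable_on_iff_abs_summable_on_real[THEN iffD1])
    have "(\<lambda>y. norm (u p y)) summable_on UNIV"
    proof (rule Infinite_Sum.abs_summable_on_comparison_test[OF a])
      fix m :: int
      have "\<bar>u p m\<bar> \<le> C * g p * g m" using ub[of p m] by (simp only: mult_ac)
      also have "\<dots> = \<bar>C * g p * g m\<bar>" using C0 g0[of p] g0[of m] by simp
      finally show "norm (u p m) \<le> norm ((\<lambda>m. C * g p * g m) m)" by simp
    qed
    then show ?thesis by (rule summable_on_iff_abs_summable_on_real[THEN iffD2])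
  qed
  define F where "F p = infsum (u p) UNIV" for p
  have inner: "((\<lambda>mn. g3 (p,mn)) has_sum F p * F p) UNIV" for p
  proof -
    have "((\<lambda>(m,n). u p m * u p n) has_sum F p * F p) (Sigma UNIV (\<lambda>_. UNIV))"
    proof (rule has_sum_SigmaI[where g = "\<lambda>m. u p m * F p"])
      fix m :: int assume "m \<in> UNIV"
      show "((\<lambda>n. (\<lambda>(m,n). u p m * u p n) (m, n)) has_sum u p m * F p) UNIV"
        using has_sum_cmult_right[OF has_sum_infsum[OF us[of p]], of "u p m"] by (simp add: F_def)
    next
      show "((\<lambda>m. u p m * F p) has_sum F p * F p) UNIV"
        using has_sum_cmult_left[OF has_sum_infsum[OF us[of p]], of "F p"] by (simp add: F_def)
    next
      show "(\<lambda>(m,n). u p m * u p n) summable_on Sigma UNIV (\<lambda>_. UNIV)" using s2[of p] by simp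
    qed
    then show ?thesis by (simp add: g3_def case_prod_unfold)
  qed
  have outer_s: "(\<lambda>p. F p * F p) summable_on UNIV"
  proof -
    have "(\<lambda>p. infsum (\<lambda>mn. g3 (p, mn)) UNIV) summable_on UNIV"
      using summable_on_SigmaD[of g3 UNIV "\<lambda>_. UNIV"] g3s inner summable_on_def by fastforce
    moreover have "infsum (\<lambda>mn. g3 (p, mn)) UNIV = F p * F p" for p
      using inner[of p] by (rule infsumI)
    ultimately show ?thesis by simp
  qed
  have g3i: "infsum g3 UNIV = infsum (\<lambda>p. F p * F p) UNIV"
  proof -
    have "infsum g3 (Sigma UNIV (\<lambda>_. UNIV)) = infsum (\<lambda>p. infsum (\<lambda>mn. g3 (p, mn)) UNIV) UNIV"
      by (rule infsum_Sigma_banach[symmetric]) (use g3s in simp)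
    also have "\<dots> = infsum (\<lambda>p. F p * F p) UNIV"
    proof (rule infsum_cong)
      fix p :: int
      show "infsum (\<lambda>mn. g3 (p, mn)) UNIV = F p * F p" using inner[of p] by (rule infsumI)
    qed
    finally show ?thesis by simp
  qed
  have F0: "F 0 > 0"
  proof -
    have u0: "u 0 m \<ge> 0" for m by (simp add: u_def)
    have "infsum (u 0) {1} \<le> infsum (u 0) UNIV"
      by (rule infsum_mono_neutral) (use us u0 in auto)
    moreover have "infsum (u 0) {1} > 0" by (simp add: u_def)
    ultimately show ?thesis by (simp add: F_def)
  qed
  have pos: "infsum (\<lambda>p. F p * F p) UNIV > 0"
  proof -
    have "infsum (\<lambda>p. F p * F p) {0} \<le> infsum (\<lambda>p. F p * F p) UNIV"
      by (rule infsum_mono_neutral) (use outer_s in auto)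
    moreover have "infsum (\<lambda>p. F p * F p) {0} > 0" using F0 by simp
    ultimately show ?thesis by linarith
  qed
  show ?thesis
    using sumD pos unfolding f3_def[symmetric]
    by (simp add: infD f3i g3i)
qed

end
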